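(* Let $G$ be a finite group of even order. Then the power graph $\mathscr{G}(G)$ is not overfull.
   Context: For a finite group $G$, the power graph $\mathscr{G}(G)$ is the simple graph with vertex set the elements of $G$, in which two distinct elements $a,b$ are adjacent if and only if one is a power of the other. For a finite simple graph $\Gamma$ on $n$ vertices with maximum vertex degree $\Delta(\Gamma)$, $\Gamma$ is called overfull if $|E(\Gamma)| / \lfloor n/2 \rfloor > \Delta(\Gamma)$. *)

theory Defs
  imports Complex_Main "HOL-Algebra.Group"
begin

text \<open>Simple graphs on a finite vertex set V given by a symmetric irreflexive
adjacency relation adj.\<close>

definition graph_edges :: "'a set \<Rightarrow> ('a \<Rightarrow> 'a \<Rightarrow> bool) \<Rightarrow> 'a set set" where
  "graph_edges V adj = {{a, b} | a b. a \<in> V \<and> b \<in> V \<and> a \<noteq> b \<and> adj a b}"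

definition graph_degree :: "'a set \<Rightarrow> ('a \<Rightarrow> 'a \<Rightarrow> bool) \<Rightarrow> 'a \<Rightarrow> nat" where
  "graph_degree V adj v = card {u \<in> V. u \<noteq> v \<and> adj v u}"

definition graph_max_degree :: "'a set \<Rightarrow> ('a \<Rightarrow> 'a \<Rightarrow> bool) \<Rightarrow> nat" where
  "graph_max_degree V adj = Max (graph_degree V adj ` V)"

definition overfull :: "'a set \<Rightarrow> ('a \<Rightarrow> 'a \<Rightarrow> bool) \<Rightarrow> bool" where
  "overfull V adj \<longleftrightarrow>
     real (card (graph_edges V adj)) / real (card V div 2) > real (graph_max_degree V adj)"

definition power_adj :: "('a, 'b) monoid_scheme \<Rightarrow> 'a \<Rightarrow> 'a \<Rightarrow> bool" where
  "power_adj G a b \<longleftrightarrow> a \<noteq> b \<and>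
     ((\<exists>n::int. b = a [^]\<^bsub>G\<^esub> n) \<or> (\<exists>n::int. a = b [^]\<^bsub>G\<^esub> n))"

end

theory Submission
  imports Defs
begin

theorem mainTheorem3:
  fixes G :: "('a, 'b) monoid_scheme"
  assumes "group G" and "finite (carrier G)" and "even (card (carrier G))"
  shows "\<not> overfull (carrier G) (power_adj G)"
proof -
  interpret group G by fact
  define V where "V = carrier G"
  define n where "n = card V"
  have fin: "finite V" using assms(2) V_def by simp
  have oneV: "\<one>\<^bsub>G\<^esub> \<in> V" using V_def by simp
  have npos: "n \<ge> 1" using fin oneV n_def
    by (metis One_nat_def Suc_leI card_gt_0_iff empty_iff)
  have nev: "even n" using assms(3) V_def n_def by simp
  have "{u \<in> V. u \<noteq> \<one>\<^bsub>G\<^esub> \<and> power_adj G \<one>\<^bsub>G\<^esub> u} = V - {\<one>\<^bsub>G\<^esub>}"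
  proof -
    have "\<And>u. u \<in> V \<Longrightarrow> u \<noteq> \<one>\<^bsub>G\<^esub> \<Longrightarrow> power_adj G \<one>\<^bsub>G\<^esub> u"
      unfolding power_adj_def V_def
      by (metis int_pow_0)
    then show ?thesis by auto
  qed
  hence deg1: "graph_degree V (power_adj G) \<one>\<^bsub>G\<^esub> = n - 1"
    unfolding graph_degree_def n_def using fin oneV by simp
  have Dge: "n - 1 \<le> graph_max_degree V (power_adj G)"
    unfolding graph_max_degree_def using fin oneV deg1
    by (metis Max_ge finite_imageI imageI)
  have sub: "graph_edges V (power_adj G) \<subseteq> {S. S \<subseteq> V \<and> card S = 2}"
    unfolding graph_edges_def by auto
  have "card {S. S \<subseteq> V \<and> card S = 2} = n choose 2"
    using n_subsets[OF fin, of 2] n_def by simp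
  hence cE: "card (graph_edges V (power_adj G)) \<le> n choose 2"
  proof -
    have "finite {S. S \<subseteq> V \<and> card S = 2}"
      using fin by (rule finite_subset[rotated, OF finite_Collect_subsets]) auto
    then show ?thesis using card_mono[OF _ sub] \<open>card {S. S \<subseteq> V \<and> card S = 2} = n choose 2\<close> by simp
  qed
  obtain k where k: "n = 2 * k" using nev by blast
  have ch: "2 * (n choose 2) = n * (n - 1)"
    unfolding choose_two k by simp
  have kpos: "k \<ge> 1" using k npos by simp
  have "card (graph_edges V (power_adj G)) \<le> k * (n - 1)"
    using cE ch k by simp
  hence "real (card (graph_edges V (power_adj G))) \<le> real k * real (n - 1)"
    by (metis of_nat_le_iff of_nat_mult)
  hence "real (card (graph_edges V (power_adj G))) / real (n div 2) \<le> real (n - 1)"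
    using k kpos by (simp add: divide_le_eq mult.commute del: of_nat_diff)
  also have "\<dots> \<le> real (graph_max_degree V (power_adj G))" using Dge by simp
  finally show ?thesis unfolding overfull_def V_def[symmetric] n_def[symmetric] by simp
qed

end
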